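(* $P_h([0,1])=\{1,2,3,\ldots\}\cup\{+\infty\}$.
   Context: For a topological space $A$, $Homeo(A)$ denotes the group of all homeomorphisms $A\to A$ under composition. For a subgroup $G$ of $Homeo(A)$ (acting by $gx=g(x)$), a nonempty subset $Y\subseteq A$ is invariant if $g(y)\in Y$ for all $g\in G$, $y\in Y$. The height of $(G,A)$ is $h(G,A)=\sup\{n\geq 0:$ there exist distinct closed invariant subsets $Y_0\subset Y_1\subset\cdots\subset Y_n=A\}$ (possibly $+\infty$). Finally $P_h(A)=\{h(G,A): G \text{ is a subgroup of } Homeo(A)\}$. *)

theory Defs
  imports "HOL-Analysis.Analysis" "HOL-Algebra.Group" "HOL-Library.Extended_Nat"
begin

definition Homeo :: "'a::topological_space set \<Rightarrow> ('a \<Rightarrow> 'a) set" where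
  "Homeo A = extensional A \<inter> {f. \<exists>g. homeomorphism A A f g}"

definition HomeoGroup :: "'a::topological_space set \<Rightarrow> ('a \<Rightarrow> 'a) monoid" where
  "HomeoGroup A =
    \<lparr>carrier = Homeo A,
     mult = \<lambda>g \<in> Homeo A. \<lambda>f \<in> Homeo A. compose A g f,
     one = \<lambda>x \<in> A. x\<rparr>"

definition closed_invariant ::
  "('a \<Rightarrow> 'a) set \<Rightarrow> 'a::topological_space set \<Rightarrow> 'a set \<Rightarrow> bool" where
  "closed_invariant G A Y \<longleftrightarrow>
     Y \<noteq> {} \<and> closedin (top_of_set A) Y \<and> (\<forall>g\<in>G. \<forall>y\<in>Y. g y \<in> Y)"

definition height :: "('a \<Rightarrow> 'a) set \<Rightarrow> 'a::topological_space set \<Rightarrow> enat" where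
  "height G A = Sup {enat n | n. \<exists>Y :: nat \<Rightarrow> 'a set.
      (\<forall>i\<le>n. closed_invariant G A (Y i)) \<and> (\<forall>i<n. Y i \<subset> Y (Suc i)) \<and> Y n = A}"

definition P_h :: "'a::topological_space set \<Rightarrow> enat set" where
  "P_h A = {height G A | G. subgroup G (HomeoGroup A)}"

end

theory Submission
  imports Defs
begin

lemma Homeo_iff: "f \<in> Homeo A \<longleftrightarrow> f \<in> extensional A \<and> (\<exists>g. homeomorphism A A f g)"
  by (simp add: Homeo_def)

lemma Homeo_restrict:
  assumes "homeomorphism A A f g" shows "restrict f A \<in> Homeo A"
proof -
  have "homeomorphism A A (restrict f A) g"
    by (rule homeomorphism_cong[OF assms]) auto
  thus ?thesis by (auto simp: Homeo_iff)
qed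

lemma Homeo_into: "f \<in> Homeo A \<Longrightarrow> x \<in> A \<Longrightarrow> f x \<in> A"
  by (auto simp: Homeo_iff homeomorphism_def)

lemma HG_simps:
  "carrier (HomeoGroup A) = Homeo A"
  "one (HomeoGroup A) = (\<lambda>x\<in>A. x)"
  "f \<in> Homeo A \<Longrightarrow> g \<in> Homeo A \<Longrightarrow> mult (HomeoGroup A) f g = compose A f g"
  by (auto simp: HomeoGroup_def)

lemma compose_Homeo: "x \<in> Homeo A \<Longrightarrow> y \<in> Homeo A \<Longrightarrow> compose A x y \<in> Homeo A"
proof -
  assume x: "x \<in> Homeo A" and y: "y \<in> Homeo A"
  then obtain x' y' where hx: "homeomorphism A A x x'" and hy: "homeomorphism A A y y'"
    by (auto simp: Homeo_iff)
  have "homeomorphism A A (x \<circ> y) (y' \<circ> x')"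
    using homeomorphism_compose[OF hy hx] .
  hence "restrict (x \<circ> y) A \<in> Homeo A" by (rule Homeo_restrict)
  thus ?thesis by (simp add: compose_def comp_def)
qed

lemma id_Homeo: "(\<lambda>x\<in>A. x) \<in> Homeo A"
proof -
  have "homeomorphism A A id id" by (simp add: homeomorphism_def)
  hence "restrict id A \<in> Homeo A" by (rule Homeo_restrict)
  thus ?thesis by (simp add: id_def)
qed

lemma group_HG: "group (HomeoGroup A)"
proof (rule groupI)
  fix x y assume x: "x \<in> carrier (HomeoGroup A)" and y: "y \<in> carrier (HomeoGroup A)"
  thus "x \<otimes>\<^bsub>HomeoGroup A\<^esub> y \<in> carrier (HomeoGroup A)"
    by (simp add: HG_simps compose_Homeo)
next
  show "\<one>\<^bsub>HomeoGroup A\<^esub> \<in> carrier (HomeoGroup A)" by (simp add: HG_simps id_Homeo)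
next
  fix x y z assume x: "x \<in> carrier (HomeoGroup A)" and y: "y \<in> carrier (HomeoGroup A)"
    and z: "z \<in> carrier (HomeoGroup A)"
  have xy: "compose A x y \<in> Homeo A" and yz: "compose A y z \<in> Homeo A"
    using x y z by (auto simp: HG_simps compose_Homeo)
  show "x \<otimes>\<^bsub>HomeoGroup A\<^esub> y \<otimes>\<^bsub>HomeoGroup A\<^esub> z = x \<otimes>\<^bsub>HomeoGroup A\<^esub> (y \<otimes>\<^bsub>HomeoGroup A\<^esub> z)"
    using x y z xy yz Homeo_into[of z A]
    by (auto simp: HG_simps compose_def fun_eq_iff)
next
  fix x assume x: "x \<in> carrier (HomeoGroup A)"
  have one: "(\<lambda>x\<in>A. x) \<in> Homeo A" by (rule id_Homeo)
  show "\<one>\<^bsub>HomeoGroup A\<^esub> \<otimes>\<^bsub>HomeoGroup A\<^esub> x = x"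
    using x one Homeo_into[of x A] by (auto simp: HG_simps compose_def fun_eq_iff Homeo_iff extensional_def)
next
  fix x assume x: "x \<in> carrier (HomeoGroup A)"
  then obtain x' where hx: "homeomorphism A A x x'"
    by (auto simp: HG_simps Homeo_iff)
  have hx': "homeomorphism A A x' x" using hx by (rule homeomorphism_symD)
  hence r: "restrict x' A \<in> Homeo A" by (rule Homeo_restrict)
  have "restrict x' A \<otimes>\<^bsub>HomeoGroup A\<^esub> x = \<one>\<^bsub>HomeoGroup A\<^esub>"
    using x r hx Homeo_into[of x A] by (auto simp: HG_simps compose_def fun_eq_iff homeomorphism_def)
  thus "\<exists>y\<in>carrier (HomeoGroup A). y \<otimes>\<^bsub>HomeoGroup A\<^esub> x = \<one>\<^bsub>HomeoGroup A\<^esub>"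
    using r by (auto simp: HG_simps)
qed


lemma inv_HG:
  assumes "f \<in> Homeo A"
  shows "inv\<^bsub>HomeoGroup A\<^esub> f \<in> Homeo A" "\<And>x. x \<in> A \<Longrightarrow> (inv\<^bsub>HomeoGroup A\<^esub> f) (f x) = x"
proof -
  interpret group "HomeoGroup A" by (rule group_HG)
  have f: "f \<in> carrier (HomeoGroup A)" using assms by (simp add: HG_simps)
  show i: "inv\<^bsub>HomeoGroup A\<^esub> f \<in> Homeo A" using inv_closed[OF f] by (simp add: HG_simps)
  have "inv\<^bsub>HomeoGroup A\<^esub> f \<otimes>\<^bsub>HomeoGroup A\<^esub> f = \<one>\<^bsub>HomeoGroup A\<^esub>" using l_inv[OF f] .
  hence e: "compose A (inv\<^bsub>HomeoGroup A\<^esub> f) f = (\<lambda>x\<in>A. x)" using i assms by (simp add: HG_simps)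
  fix x assume x: "x \<in> A"
  show "(inv\<^bsub>HomeoGroup A\<^esub> f) (f x) = x"
    using fun_cong[OF e, of x] x by (simp add: compose_def)
qed

lemma homeo01_cases:
  assumes "f \<in> Homeo {0..1::real}"
  shows "(mono_on {0..1} f \<and> f 0 = 0 \<and> f 1 = 1) \<or> (antimono_on {0..1} f \<and> f 0 = 1 \<and> f 1 = 0)"
proof -
  obtain g where h: "homeomorphism {0..1} {0..1} f g" using assms by (auto simp: Homeo_iff)
  have cont: "continuous_on {0..1::real} f" using h by (simp add: homeomorphism_def)
  have inj: "inj_on f {0..1}" using h by (metis homeomorphism_def inj_on_inverseI)
  have im: "f ` {0..1} = {0..1}" using h by (simp add: homeomorphism_def)
  have "strict_mono_on {0..1} f \<or> strict_antimono_on {0..1} f"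
    using injective_eq_monotone_map[OF is_interval_cc cont] inj by simp
  thus ?thesis
  proof
    assume sm: "strict_mono_on {0..1} f"
    hence m: "mono_on {0..1} f" by (rule strict_mono_on_imp_mono_on)
    have "0 \<in> f ` {0..1}" using im by auto
    then obtain y where y: "y \<in> {0..1}" "f y = 0" by auto
    have "f 0 \<le> f y" using mono_onD[OF m, of 0 y] y by auto
    moreover have "f 0 \<in> {0..1}" using im by auto
    ultimately have f0: "f 0 = 0" using y by auto
    have "1 \<in> f ` {0..1}" using im by auto
    then obtain y' where y': "y' \<in> {0..1}" "f y' = 1" by auto
    have "f y' \<le> f 1" using mono_onD[OF m, of y' 1] y' by auto
    moreover have "f 1 \<in> {0..1}" using im by auto
    ultimately have "f 1 = 1" using y' by auto
    thus ?thesis using m f0 by auto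
  next
    assume sm: "strict_antimono_on {0..1} f"
    hence m: "antimono_on {0..1} f"
      using strict_antimono_iff_antimono by blast
    have "1 \<in> f ` {0..1}" using im by auto
    then obtain y where y: "y \<in> {0..1}" "f y = 1" by auto
    have "f y \<le> f 0" using monotone_onD[OF m, of 0 y] y by auto
    moreover have "f 0 \<in> {0..1}" using im by auto
    ultimately have f0: "f 0 = 1" using y by auto
    have "0 \<in> f ` {0..1}" using im by auto
    then obtain y' where y': "y' \<in> {0..1}" "f y' = 0" by auto
    have "f 1 \<le> f y'" using monotone_onD[OF m, of y' 1] y' by auto
    moreover have "f 1 \<in> {0..1}" using im by auto
    ultimately have "f 1 = 0" using y' by auto
    thus ?thesis using m f0 by auto
  qed
qed

definition bump :: "real \<Rightarrow> real \<Rightarrow> real \<Rightarrow> real \<Rightarrow> real \<Rightarrow> real" where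
  "bump a z m b x = x + ((m-a)/(z-a) - 1) * (min (max x a) z - a) + ((b-m)/(b-z) - 1) * (min (max x z) b - z)"

lemma bump_cont: "continuous_on S (bump a z m b)"
  unfolding bump_def by (intro continuous_intros)

lemma bump_aux1: fixes a b z m x :: real shows "a < z \<Longrightarrow> ((m-a)/(z-a) - 1) * (z - a) = m - z"
  by (subgoal_tac "z - a \<noteq> 0") (simp_all add: field_simps)
lemma bump_aux2: fixes a b z m x :: real shows "z < b \<Longrightarrow> ((b-m)/(b-z) - 1) * (b - z) = z - m"
  by (subgoal_tac "b - z \<noteq> 0") (simp_all add: field_simps)
lemma bump_aux3: fixes a b z m x :: real shows "a < z \<Longrightarrow> x + ((m-a)/(z-a) - 1) * (x - a) = a + (m-a)/(z-a)*(x-a)"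
  by (subgoal_tac "z - a \<noteq> 0") (simp_all add: field_simps)
lemma bump_aux4: fixes a b z m x :: real shows "z < b \<Longrightarrow> x + (m - z) + ((b-m)/(b-z) - 1) * (x - z) = m + (b-m)/(b-z)*(x-z)"
  by (subgoal_tac "b - z \<noteq> 0") (simp_all add: field_simps)

lemma bump_left: "a < z \<Longrightarrow> z < b \<Longrightarrow> x \<le> a \<Longrightarrow> bump a z m b x = x"
  by (simp add: bump_def)

lemma bump_right: "a < z \<Longrightarrow> z < b \<Longrightarrow> b \<le> x \<Longrightarrow> bump a z m b x = x"
  using bump_aux1[of a z m] bump_aux2[of z b m] by (simp add: bump_def)

lemma bump_mid1: "a < z \<Longrightarrow> z < b \<Longrightarrow> a \<le> x \<Longrightarrow> x \<le> z \<Longrightarrow> bump a z m b x = a + (m-a)/(z-a)*(x-a)"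
  using bump_aux3[of a z x m] by (simp add: bump_def)

lemma bump_mid2: "a < z \<Longrightarrow> z < b \<Longrightarrow> z \<le> x \<Longrightarrow> x \<le> b \<Longrightarrow> bump a z m b x = m + (b-m)/(b-z)*(x-z)"
  using bump_aux1[of a z m] bump_aux4[of z b x m] by (simp add: bump_def algebra_simps)


lemma bump_range1:
  fixes a z m b x :: real
  assumes "a < z" "z < b" "a < m" "m < b" "a \<le> x" "x \<le> z"
  shows "a \<le> bump a z m b x" "bump a z m b x \<le> m"
proof -
  have e: "bump a z m b x = a + (m-a)/(z-a)*(x-a)" using assms bump_mid1 by blast
  have "(m-a)/(z-a)*(x-a) \<le> (m-a)/(z-a)*(z-a)" using assms by (intro mult_left_mono) auto
  also have "\<dots> = m - a" using assms by simp
  finally show "bump a z m b x \<le> m" using e by simp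
  have "0 \<le> (m-a)/(z-a)*(x-a)" using assms by simp
  thus "a \<le> bump a z m b x" using e by simp
qed

lemma bump_range2:
  fixes a z m b x :: real
  assumes "a < z" "z < b" "a < m" "m < b" "z \<le> x" "x \<le> b"
  shows "m \<le> bump a z m b x" "bump a z m b x \<le> b"
proof -
  have e: "bump a z m b x = m + (b-m)/(b-z)*(x-z)" using assms bump_mid2 by blast
  have "(b-m)/(b-z)*(x-z) \<le> (b-m)/(b-z)*(b-z)" using assms by (intro mult_left_mono) auto
  also have "\<dots> = b - m" using assms by simp
  finally show "bump a z m b x \<le> b" using e by simp
  have "0 \<le> (b-m)/(b-z)*(x-z)" using assms by simp
  thus "m \<le> bump a z m b x" using e by simp
qed

lemma bump_inv:
  fixes a z m b x :: real
  assumes "a < z" "z < b" "a < m" "m < b"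
  shows "bump a m z b (bump a z m b x) = x"
proof (cases "x \<le> a")
  case True thus ?thesis using assms by (simp add: bump_left)
next
  case xa: False
  show ?thesis
  proof (cases "b \<le> x")
    case True thus ?thesis using assms by (simp add: bump_right)
  next
    case xb: False
    show ?thesis
    proof (cases "x \<le> z")
      case True
      let ?y = "bump a z m b x"
      have y: "a \<le> ?y" "?y \<le> m" using bump_range1[OF assms, of x] True xa by auto
      have "bump a m z b ?y = a + (z-a)/(m-a)*(?y-a)" using bump_mid1[of a m b ?y z] y assms by auto
      also have "\<dots> = a + (z-a)/(m-a)*((m-a)/(z-a)*(x-a))" using bump_mid1[of a z b x m] True xa assms by auto
      also have "\<dots> = x" using assms by simp
      finally show ?thesis .
    next
      case False
      let ?y = "bump a z m b x"
      have y: "m \<le> ?y" "?y \<le> b" using bump_range2[OF assms, of x] False xb by auto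
      have "bump a m z b ?y = z + (b-z)/(b-m)*(?y-m)" using bump_mid2[of a m b ?y z] y assms by auto
      also have "\<dots> = z + (b-z)/(b-m)*((b-m)/(b-z)*(x-z))" using bump_mid2[of a z b x m] False xb assms by auto
      also have "\<dots> = x" using assms by simp
      finally show ?thesis .
    qed
  qed
qed

lemma bump_into:
  fixes a z m b x :: real
  assumes "a < z" "z < b" "a < m" "m < b" "0 \<le> a" "b \<le> 1" "x \<in> {0..1}"
  shows "bump a z m b x \<in> {0..1}"
proof -
  consider "x \<le> a" | "b \<le> x" | "a \<le> x" "x \<le> z" | "z \<le> x" "x \<le> b" by linarith
  thus ?thesis
  proof cases
    case 1 thus ?thesis using assms by (simp add: bump_left)
  next
    case 2 thus ?thesis using assms by (simp add: bump_right)
  next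
    case 3 thus ?thesis using bump_range1[OF assms(1-4), of x] assms by auto
  next
    case 4 thus ?thesis using bump_range2[OF assms(1-4), of x] assms by auto
  qed
qed

lemma bump_homeo:
  fixes a z m b :: real
  assumes "a < z" "z < b" "a < m" "m < b" "0 \<le> a" "b \<le> 1"
  shows "homeomorphism {0..1} {0..1} (bump a z m b) (bump a m z b)"
proof -
  have i1: "\<And>x. x \<in> {0..1} \<Longrightarrow> bump a z m b x \<in> {0..1}" using bump_into[OF assms] by blast
  have i2: "\<And>x. x \<in> {0..1} \<Longrightarrow> bump a m z b x \<in> {0..1}"
    using bump_into[of a m b z] assms by blast
  have v1: "\<And>x. bump a m z b (bump a z m b x) = x" using bump_inv[OF assms(1-4)] by blast
  have v2: "\<And>x. bump a z m b (bump a m z b x) = x" using bump_inv[of a m b z] assms by blast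
  have im1: "bump a z m b ` {0..1} = {0..1}"
  proof
    show "bump a z m b ` {0..1} \<subseteq> {0..1}" using i1 by blast
    show "{0..1} \<subseteq> bump a z m b ` {0..1}"
    proof
      fix y :: real assume "y \<in> {0..1}"
      thus "y \<in> bump a z m b ` {0..1}" using i2 v2 by (metis image_eqI)
    qed
  qed
  have im2: "bump a m z b ` {0..1} = {0..1}"
  proof
    show "bump a m z b ` {0..1} \<subseteq> {0..1}" using i2 by blast
    show "{0..1} \<subseteq> bump a m z b ` {0..1}"
    proof
      fix y :: real assume "y \<in> {0..1}"
      thus "y \<in> bump a m z b ` {0..1}" using i1 v1 by (metis image_eqI)
    qed
  qed
  show ?thesis unfolding homeomorphism_def
    by (intro conjI ballI v1 v2 im1 im2 bump_cont)
qed


definition FN :: "nat \<Rightarrow> real set" where "FN N = {real i / real N | i. i \<le> N}"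
definition GN :: "nat \<Rightarrow> (real \<Rightarrow> real) set" where
  "GN N = {g \<in> Homeo {0..1}. (\<forall>x\<in>FN N. g x = x) \<or> (\<forall>x\<in>FN N. g x = 1 - x)}"

lemma FN_sub: "x \<in> FN N \<Longrightarrow> x \<in> {0..1::real}"
  by (auto simp: FN_def divide_le_eq_1)

lemma FN_sym: "N > 0 \<Longrightarrow> x \<in> FN N \<Longrightarrow> 1 - x \<in> FN N"
proof -
  assume N: "N > 0" and "x \<in> FN N"
  then obtain i where i: "i \<le> N" "x = real i / real N" by (auto simp: FN_def)
  have "1 - x = real (N - i) / real N" using i N by (simp add: of_nat_diff field_simps)
  moreover have "N - i \<le> N" by simp
  ultimately show ?thesis unfolding FN_def by blast
qed

lemma subgroup_GN: assumes N: "N > 0" shows "subgroup (GN N) (HomeoGroup {0..1})"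
proof -
  let ?A = "{0..1::real}"
  interpret group "HomeoGroup ?A" by (rule group_HG)
  show ?thesis
  proof (rule subgroupI)
    show "GN N \<subseteq> carrier (HomeoGroup ?A)" by (auto simp: GN_def HG_simps)
  next
    have "(\<lambda>x\<in>?A. x) \<in> GN N" using id_Homeo[of ?A] FN_sub by (auto simp: GN_def)
    thus "GN N \<noteq> {}" by blast
  next
    fix a assume a: "a \<in> GN N"
    hence aH: "a \<in> Homeo ?A" by (simp add: GN_def)
    have iH: "inv\<^bsub>HomeoGroup ?A\<^esub> a \<in> Homeo ?A" using inv_HG(1)[OF aH] .
    from a have "(\<forall>x\<in>FN N. a x = x) \<or> (\<forall>x\<in>FN N. a x = 1 - x)" by (simp add: GN_def)
    thus "inv\<^bsub>HomeoGroup ?A\<^esub> a \<in> GN N"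
    proof
      assume h: "\<forall>x\<in>FN N. a x = x"
      have "\<forall>x\<in>FN N. (inv\<^bsub>HomeoGroup ?A\<^esub> a) x = x"
        using h inv_HG(2)[OF aH] FN_sub by metis
      thus ?thesis using iH by (simp add: GN_def)
    next
      assume h: "\<forall>x\<in>FN N. a x = 1 - x"
      have "\<forall>x\<in>FN N. (inv\<^bsub>HomeoGroup ?A\<^esub> a) x = 1 - x"
      proof
        fix x assume x: "x \<in> FN N"
        have x': "1 - x \<in> FN N" using FN_sym[OF N x] .
        have "a (1 - x) = x" using h x' by simp
        hence "(inv\<^bsub>HomeoGroup ?A\<^esub> a) x = (inv\<^bsub>HomeoGroup ?A\<^esub> a) (a (1 - x))" by simp
        also have "\<dots> = 1 - x" using inv_HG(2)[OF aH] FN_sub[OF x'] by blast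
        finally show "(inv\<^bsub>HomeoGroup ?A\<^esub> a) x = 1 - x" .
      qed
      thus ?thesis using iH by (simp add: GN_def)
    qed
  next
    fix a b assume a: "a \<in> GN N" and b: "b \<in> GN N"
    hence aH: "a \<in> Homeo ?A" and bH: "b \<in> Homeo ?A" by (simp_all add: GN_def)
    have m: "a \<otimes>\<^bsub>HomeoGroup ?A\<^esub> b = compose ?A a b" using aH bH by (simp add: HG_simps)
    have cH: "compose ?A a b \<in> Homeo ?A" using compose_Homeo[OF aH bH] .
    have ev: "\<And>x. x \<in> FN N \<Longrightarrow> compose ?A a b x = a (b x)" using FN_sub by (simp add: compose_def)
    have "(\<forall>x\<in>FN N. a (b x) = x) \<or> (\<forall>x\<in>FN N. a (b x) = 1 - x)"
    proof -
      from a have A: "(\<forall>x\<in>FN N. a x = x) \<or> (\<forall>x\<in>FN N. a x = 1 - x)" by (simp add: GN_def)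
      from b have B: "(\<forall>x\<in>FN N. b x = x) \<or> (\<forall>x\<in>FN N. b x = 1 - x)" by (simp add: GN_def)
      from A B show ?thesis using FN_sym[OF N] by auto
    qed
    thus "a \<otimes>\<^bsub>HomeoGroup ?A\<^esub> b \<in> GN N" using m cH ev by (simp add: GN_def)
  qed
qed


lemma height_lower:
  assumes "\<forall>i\<le>n. closed_invariant G A (Y i)" "\<forall>i<n. Y i \<subset> Y (Suc i)" "Y n = A"
  shows "enat n \<le> height G A"
  unfolding height_def by (rule Sup_upper) (use assms in blast)

lemma ci_sub: "closed_invariant G A Y \<Longrightarrow> Y \<subseteq> A"
  unfolding closed_invariant_def using closedin_imp_subset by fastforce

lemma height_upper:
  assumes fin: "finite D"
    and tr: "\<And>z. z \<in> A \<Longrightarrow> \<exists>g\<in>G. g z \<in> D \<and> (\<exists>h\<in>G. h (g z) = z)"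
  shows "height G A \<le> enat (card D - 1)"
  unfolding height_def
proof (rule Sup_least)
  fix e assume "e \<in> {enat n | n. \<exists>Y :: nat \<Rightarrow> 'a set.
      (\<forall>i\<le>n. closed_invariant G A (Y i)) \<and> (\<forall>i<n. Y i \<subset> Y (Suc i)) \<and> Y n = A}"
  then obtain n Y where e: "e = enat n" and ci: "\<forall>i\<le>n. closed_invariant G A (Y i)"
    and ch: "\<forall>i<n. Y i \<subset> Y (Suc i)" by blast
  have inv: "\<And>i g y. i \<le> n \<Longrightarrow> g \<in> G \<Longrightarrow> y \<in> Y i \<Longrightarrow> g y \<in> Y i"
    using ci by (auto simp: closed_invariant_def)
  have key: "i \<le> n \<Longrightarrow> Suc i \<le> card (Y i \<inter> D)" for i
  proof (induction i)
    case 0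
    have "Y 0 \<noteq> {}" using ci by (auto simp: closed_invariant_def)
    then obtain z where z: "z \<in> Y 0" by blast
    have "z \<in> A" using ci_sub[of G A "Y 0"] ci z by auto
    then obtain g where g: "g \<in> G" "g z \<in> D" using tr by blast
    have "g z \<in> Y 0 \<inter> D" using inv[of 0 g z] g z by auto
    hence "Y 0 \<inter> D \<noteq> {}" by blast
    moreover have "finite (Y 0 \<inter> D)" using fin by simp
    ultimately show ?case by (simp add: Suc_le_eq card_gt_0_iff)
  next
    case (Suc i)
    have i: "i < n" using Suc.prems by simp
    have IH: "Suc i \<le> card (Y i \<inter> D)" using Suc.IH i by simp
    have ps: "Y i \<subset> Y (Suc i)" using ch i by simp
    then obtain z where z: "z \<in> Y (Suc i)" "z \<notin> Y i" by blast
    have "z \<in> A" using ci_sub[of G A "Y (Suc i)"] ci z Suc.prems by auto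
    then obtain g h where g: "g \<in> G" "g z \<in> D" "h \<in> G" "h (g z) = z" using tr by blast
    have d1: "g z \<in> Y (Suc i)" using inv[of "Suc i" g z] g z Suc.prems by auto
    have d2: "g z \<notin> Y i" using inv[of i h "g z"] g z i by auto
    have "Y i \<inter> D \<subset> Y (Suc i) \<inter> D" using ps d1 d2 g by blast
    hence "card (Y i \<inter> D) < card (Y (Suc i) \<inter> D)" using fin by (intro psubset_card_mono) auto
    thus ?case using IH by simp
  qed
  have "Suc n \<le> card (Y n \<inter> D)" using key by simp
  also have "\<dots> \<le> card D" using fin by (intro card_mono) auto
  finally show "e \<le> enat (card D - 1)" using e by simp
qed


definition DN :: "nat \<Rightarrow> real set" where "DN N = (\<lambda>j. real j / (2 * real N)) ` {..N}"

lemma id_GN: "(\<lambda>x\<in>{0..1::real}. x) \<in> GN N"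
  using id_Homeo[of "{0..1::real}"] FN_sub by (auto simp: GN_def)

lemma refl_GN: "(\<lambda>x\<in>{0..1::real}. 1 - x) \<in> GN N"
proof -
  have h: "homeomorphism {0..1::real} {0..1} (\<lambda>x. 1 - x) (\<lambda>x. 1 - x)"
    unfolding homeomorphism_def
    by (auto intro!: continuous_intros simp: image_iff)
  have "(\<lambda>x\<in>{0..1::real}. 1 - x) \<in> Homeo {0..1}" using Homeo_restrict[OF h] .
  thus ?thesis using FN_sub by (auto simp: GN_def)
qed

lemma bump_GN:
  fixes z m :: real
  assumes N: "N > 0" and k: "k + 1 \<le> N"
    and az: "real k / real N < z" and zb: "z < real (k+1) / real N"
    and am: "real k / real N < m" and mb: "m < real (k+1) / real N"
  shows "(\<lambda>x\<in>{0..1::real}. bump (real k / real N) z m (real (k+1) / real N) x) \<in> GN N"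
proof -
  let ?a = "real k / real N" and ?b = "real (k+1) / real N"
  have a0: "0 \<le> ?a" by simp
  have b1: "?b \<le> 1" using k N by (simp add: divide_le_eq_1)
  have h: "homeomorphism {0..1} {0..1} (bump ?a z m ?b) (bump ?a m z ?b)"
    by (rule bump_homeo) (use az zb am mb a0 b1 in auto)
  have H: "(\<lambda>x\<in>{0..1::real}. bump ?a z m ?b x) \<in> Homeo {0..1}" using Homeo_restrict[OF h] by simp
  have "\<forall>x\<in>FN N. (\<lambda>x\<in>{0..1::real}. bump ?a z m ?b x) x = x"
  proof
    fix x assume x: "x \<in> FN N"
    then obtain i where i: "i \<le> N" "x = real i / real N" by (auto simp: FN_def)
    have "bump ?a z m ?b x = x"
    proof (cases "i \<le> k")
      case True
      hence "x \<le> ?a" using i N by (simp add: divide_right_mono)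
      thus ?thesis using az zb by (intro bump_left) auto
    next
      case False
      hence "?b \<le> x" using i N by (simp add: divide_right_mono)
      thus ?thesis using az zb by (intro bump_right) auto
    qed
    thus "(\<lambda>x\<in>{0..1::real}. bump ?a z m ?b x) x = x" using FN_sub[OF x] by simp
  qed
  thus ?thesis using H by (simp add: GN_def)
qed

lemma GN_half:
  fixes w :: real
  assumes N: "N > 0" and w0: "0 \<le> w" and w1: "w \<le> 1/2"
  shows "\<exists>g\<in>GN N. g w \<in> DN N"
proof -
  have "\<exists>k::nat. real k \<le> w * real N \<and> w * real N < real k + 1"
  proof (intro exI[of _ "nat \<lfloor>w * real N\<rfloor>"])
    have "0 \<le> \<lfloor>w * real N\<rfloor>" using w0 by simp
    hence e: "real (nat \<lfloor>w * real N\<rfloor>) = of_int \<lfloor>w * real N\<rfloor>" by simp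
    show "real (nat \<lfloor>w * real N\<rfloor>) \<le> w * real N \<and> w * real N < real (nat \<lfloor>w * real N\<rfloor>) + 1"
      unfolding e by linarith
  qed
  then obtain k :: nat where k1: "real k \<le> w * real N" and k2: "w * real N < real k + 1" by blast
  have Npos: "real N > 0" using N by simp
  have wA: "w \<in> {0..1}" using w0 w1 by simp
  show ?thesis
  proof (cases "real k = w * real N")
    case True
    have "2 * real k \<le> real N" using True w1 Npos by (simp add: mult_right_mono)
    hence kN: "2 * k \<le> N" by linarith
    have "w = real (2*k) / (2 * real N)" using True Npos by (simp add: field_simps)
    hence "w \<in> DN N" using kN unfolding DN_def by blast
    hence "(\<lambda>x\<in>{0..1::real}. x) w \<in> DN N" using wA by simp
    thus ?thesis using id_GN[of N] by blast
  next
    case False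
    hence kl: "real k < w * real N" using k1 by simp
    have "w * real N \<le> 1/2 * real N" by (rule mult_right_mono) (use w1 in auto)
    hence "2 * real k < real N" using kl by linarith
    hence kN: "2 * k + 1 \<le> N" by linarith
    let ?m = "real (2*k+1) / (2 * real N)"
    have az: "real k / real N < w" using kl Npos by (simp add: field_simps)
    have zb: "w < real (k+1) / real N" using k2 Npos by (simp add: field_simps)
    have am: "real k / real N < ?m" using Npos by (simp add: field_simps)
    have mb: "?m < real (k+1) / real N" using Npos by (simp add: field_simps)
    have g: "(\<lambda>x\<in>{0..1::real}. bump (real k / real N) w ?m (real (k+1) / real N) x) \<in> GN N"
      by (rule bump_GN) (use N kN az zb am mb in auto)
    have "bump (real k / real N) w ?m (real (k+1) / real N) w = ?m"
    proof -
      let ?a = "real k / real N"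
      have "bump ?a w ?m (real (k+1) / real N) w = ?a + (?m-?a)/(w-?a)*(w-?a)"
        using bump_mid1[of ?a w "real (k+1) / real N" w ?m] az zb by simp
      also have "\<dots> = ?m" using az by simp
      finally show ?thesis .
    qed
    moreover have "?m \<in> DN N" using kN unfolding DN_def by blast
    ultimately have "(\<lambda>x\<in>{0..1::real}. bump (real k / real N) w ?m (real (k+1) / real N) x) w \<in> DN N"
      using wA by simp
    thus ?thesis using g by blast
  qed
qed


lemma GN_trans:
  assumes N: "N > 0" and z: "z \<in> {0..1::real}"
  shows "\<exists>g\<in>GN N. g z \<in> DN N"
proof (cases "z \<le> 1/2")
  case True thus ?thesis using GN_half[OF N] z by auto
next
  case False
  obtain g' where g': "g' \<in> GN N" "g' (1 - z) \<in> DN N" using GN_half[OF N, of "1 - z"] False z by auto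
  interpret subgroup "GN N" "HomeoGroup {0..1}" by (rule subgroup_GN[OF N])
  have r: "(\<lambda>x\<in>{0..1::real}. 1 - x) \<in> GN N" by (rule refl_GN)
  have gH: "g' \<in> Homeo {0..1}" and rH: "(\<lambda>x\<in>{0..1::real}. 1 - x) \<in> Homeo {0..1}"
    using g'(1) r by (auto simp: GN_def)
  have c: "g' \<otimes>\<^bsub>HomeoGroup {0..1}\<^esub> (\<lambda>x\<in>{0..1::real}. 1 - x) \<in> GN N" using g'(1) r by blast
  have "(g' \<otimes>\<^bsub>HomeoGroup {0..1}\<^esub> (\<lambda>x\<in>{0..1::real}. 1 - x)) z = g' (1 - z)"
    using gH rH z by (simp add: HG_simps compose_def)
  thus ?thesis using c g'(2) by metis
qed

lemma card_DN: "N > 0 \<Longrightarrow> card (DN N) = N + 1"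
proof -
  assume N: "N > 0"
  have "inj_on (\<lambda>j. real j / (2 * real N)) {..N}" using N by (auto simp: inj_on_def)
  thus ?thesis unfolding DN_def by (simp add: card_image)
qed

lemma height_GN_le: assumes N: "N > 0" shows "height (GN N) {0..1::real} \<le> enat N"
proof -
  interpret subgroup "GN N" "HomeoGroup {0..1}" by (rule subgroup_GN[OF N])
  have "height (GN N) {0..1::real} \<le> enat (card (DN N) - 1)"
  proof (rule height_upper)
    show "finite (DN N)" by (simp add: DN_def)
  next
    fix z :: real assume z: "z \<in> {0..1}"
    obtain g where g: "g \<in> GN N" "g z \<in> DN N" using GN_trans[OF N z] by blast
    have gH: "g \<in> Homeo {0..1}" using g by (simp add: GN_def)
    have "inv\<^bsub>HomeoGroup {0..1}\<^esub> g \<in> GN N" using g(1) by blast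
    moreover have "(inv\<^bsub>HomeoGroup {0..1}\<^esub> g) (g z) = z" using inv_HG(2)[OF gH z] .
    ultimately show "\<exists>g\<in>GN N. g z \<in> DN N \<and> (\<exists>h\<in>GN N. h (g z) = z)" using g by blast
  qed
  thus ?thesis using card_DN[OF N] by simp
qed


definition SN :: "real \<Rightarrow> real set \<Rightarrow> real set" where
  "SN c E = {x \<in> {0..1::real}. x \<le> c \<or> x \<ge> 1 - c \<or> x \<in> E}"

lemma FN_0: "0 \<in> FN N" by (auto simp: FN_def intro: exI[of _ 0])

lemma SN_inv:
  assumes N: "N > 0" and c: "c \<in> FN N" and E: "E \<subseteq> FN N" and Es: "\<And>x. x \<in> E \<Longrightarrow> 1 - x \<in> E"
    and g: "g \<in> GN N" and y: "y \<in> SN c E"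
  shows "g y \<in> SN c E"
proof -
  have gH: "g \<in> Homeo {0..1}" using g by (simp add: GN_def)
  have yA: "y \<in> {0..1}" using y by (simp add: SN_def)
  have gyA: "g y \<in> {0..1}" using Homeo_into[OF gH yA] .
  have cA: "c \<in> {0..1}" and c'A: "1 - c \<in> {0..1}" using FN_sub[OF c] by auto
  have c': "1 - c \<in> FN N" using FN_sym[OF N c] .
  from g have "(\<forall>x\<in>FN N. g x = x) \<or> (\<forall>x\<in>FN N. g x = 1 - x)" by (simp add: GN_def)
  thus ?thesis
  proof
    assume h: "\<forall>x\<in>FN N. g x = x"
    hence "g 0 = 0" using FN_0 by blast
    hence m: "mono_on {0..1} g" using homeo01_cases[OF gH] by auto
    have "g y \<le> c \<or> g y \<ge> 1 - c \<or> g y \<in> E"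
    proof -
      consider "y \<le> c" | "y \<ge> 1 - c" | "y \<in> E" using y by (auto simp: SN_def)
      thus ?thesis
      proof cases
        case 1 thus ?thesis using mono_onD[OF m yA cA] h c by auto
      next
        case 2 thus ?thesis using mono_onD[OF m c'A yA] h c' by auto
      next
        case 3 thus ?thesis using h E by auto
      qed
    qed
    thus ?thesis using gyA by (simp add: SN_def)
  next
    assume h: "\<forall>x\<in>FN N. g x = 1 - x"
    hence "g 0 = 1" using FN_0 by fastforce
    hence m: "antimono_on {0..1} g" using homeo01_cases[OF gH] by auto
    have "g y \<le> c \<or> g y \<ge> 1 - c \<or> g y \<in> E"
    proof -
      consider "y \<le> c" | "y \<ge> 1 - c" | "y \<in> E" using y by (auto simp: SN_def)
      thus ?thesis
      proof cases
        case 1 thus ?thesis using monotone_onD[OF m yA cA] h c by auto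
      next
        case 2 thus ?thesis using monotone_onD[OF m c'A yA] h c' by auto
      next
        case 3 thus ?thesis using h E Es by auto
      qed
    qed
    thus ?thesis using gyA by (simp add: SN_def)
  qed
qed

lemma SN_closed: "finite E \<Longrightarrow> closedin (top_of_set {0..1::real}) (SN c E)"
proof -
  assume E: "finite E"
  have "SN c E = {0..1} \<inter> ({..c} \<union> {1-c..} \<union> E)" by (auto simp: SN_def)
  moreover have "closed ({..c} \<union> {1-c..} \<union> E)" using E by (intro closed_Un finite_imp_closed closed_atMost closed_atLeast)
  ultimately show ?thesis by (simp add: closedin_closed_Int)
qed

lemma SN_ci:
  assumes N: "N > 0" and c: "c \<in> FN N" and E: "E \<subseteq> FN N" and Es: "\<And>x. x \<in> E \<Longrightarrow> 1 - x \<in> E"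
    and fE: "finite E"
  shows "closed_invariant (GN N) {0..1} (SN c E)"
proof -
  have "0 \<in> SN c E" using FN_sub[OF c] by (auto simp: SN_def)
  thus ?thesis unfolding closed_invariant_def using SN_closed[OF fE] SN_inv[OF N c E Es] by blast
qed

lemma A_ci: "closed_invariant (GN N) {0..1::real} {0..1}"
  unfolding closed_invariant_def using Homeo_into[of _ "{0..1::real}"] by (auto simp: GN_def)


definition YN :: "nat \<Rightarrow> nat \<Rightarrow> real set" where
  "YN N i = (if i = N then {0..1} else SN (real (i div 2) / real N)
     (if odd i then {real (i div 2 + 1) / real N, 1 - real (i div 2 + 1) / real N} else {}))"

lemma YN_ci: assumes N: "N > 0" and i: "i \<le> N" shows "closed_invariant (GN N) {0..1} (YN N i)"
proof (cases "i = N")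
  case True thus ?thesis by (simp add: YN_def A_ci)
next
  case False
  hence iN: "i < N" using i by simp
  have c: "real (i div 2) / real N \<in> FN N" unfolding FN_def using iN by fastforce
  have e1: "real (i div 2 + 1) / real N \<in> FN N" unfolding FN_def using iN
    by (intro CollectI exI[of _ "i div 2 + 1"]) auto
  have e2: "1 - real (i div 2 + 1) / real N \<in> FN N" using FN_sym[OF N e1] .
  let ?E = "if odd i then {real (i div 2 + 1) / real N, 1 - real (i div 2 + 1) / real N} else {}"
  have "closed_invariant (GN N) {0..1} (SN (real (i div 2) / real N) ?E)"
    by (rule SN_ci[OF N c]) (use e1 e2 in auto)
  thus ?thesis using False by (simp add: YN_def)
qed

lemma YN_step:
  assumes N: "N > 0" and iN: "i < N"
  shows "YN N i \<subset> YN N (Suc i)"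
proof -
  define k where "k = i div 2"
  have Np: "real N > 0" using N by simp
  have sub: "YN N i \<subseteq> {0..1}" by (auto simp: YN_def SN_def)
  have wk: "w \<notin> YN N i" if w0: "real k / real N < w" and w1: "w < 1 - real k / real N"
      and w2: "w \<noteq> real (k+1) / real N" and w3: "w \<noteq> 1 - real (k+1) / real N" for w
    using iN w0 w1 w2 w3 by (auto simp: YN_def SN_def k_def)
  let ?m = "real (2*k+1) / (2 * real N)"
  have mA: "?m \<in> {0..1}"
  proof -
    have "2*k+1 \<le> 2 * N" unfolding k_def using iN by linarith
    hence "real (2*k+1) \<le> 2 * real N" by linarith
    thus ?thesis using Np by (simp add: divide_le_eq_1)
  qed
  have mnot: "?m \<notin> YN N i"
  proof (rule wk)
    show "real k / real N < ?m" using Np by (simp add: field_simps)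
    have "4 * k + 1 < 2 * N" unfolding k_def using iN by linarith
    hence "4 * real k + 1 < 2 * real N" by linarith
    hence "?m < (2*real N - 2*real k) / (2*real N)"
      using Np by (intro divide_strict_right_mono) auto
    also have "\<dots> = 1 - real k / real N" using Np by (simp add: field_simps)
    finally show "?m < 1 - real k / real N" .
    show "?m \<noteq> real (k+1) / real N" using Np by (simp add: field_simps)
    show "?m \<noteq> 1 - real (k+1) / real N"
    proof
      assume "?m = 1 - real (k+1) / real N"
      also have "1 - real (k+1) / real N = (2 * real N - 2 * real (k+1)) / (2 * real N)"
        using Np by (simp add: field_simps)
      finally have "real (2*k+1) = 2 * real N - 2 * real (k+1)" using Np by simp
      hence "2*k+1 + 2*(k+1) = 2 * N" by linarith
      thus False by presburger
    qed
  qed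
  show ?thesis
  proof (cases "Suc i = N")
    case True
    have "YN N (Suc i) = {0..1}" using True by (simp add: YN_def)
    thus ?thesis using sub mnot mA by blast
  next
    case False
    hence SiN: "Suc i < N" using iN by simp
    have "i = 2*k \<or> i = 2*k+1" unfolding k_def by presburger
    then consider "i = 2*k" | "i = 2*k+1" by blast
    thus ?thesis
    proof cases
      case 1
      have Yi: "YN N i = SN (real k / real N) {}" using 1 iN by (simp add: YN_def)
      have Yi': "YN N (Suc i) = SN (real k / real N) {real (k+1) / real N, 1 - real (k+1) / real N}"
        using 1 SiN by (simp add: YN_def)
      let ?w = "real (k+1) / real N"
      have wA: "?w \<in> {0..1}" using SiN 1 Np by (simp add: divide_le_eq_1)
      have wnot: "?w \<notin> YN N i"
      proof -
        have "2 * k + 1 < N" using SiN 1 by simp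
        hence "2 * real k + 1 < real N" by linarith
        hence "?w < (real N - real k) / real N"
          using Np by (intro divide_strict_right_mono) auto
        also have "\<dots> = 1 - real k / real N" using Np by (simp add: field_simps)
        finally have "?w < 1 - real k / real N" .
        moreover have "real k / real N < ?w" using Np by (simp add: field_simps)
        ultimately show ?thesis unfolding Yi SN_def by auto
      qed
      have "?w \<in> YN N (Suc i)" using wA unfolding Yi' SN_def by auto
      moreover have "YN N i \<subseteq> YN N (Suc i)" unfolding Yi Yi' SN_def by auto
      ultimately show ?thesis using wnot by blast
    next
      case 2
      have Yi: "YN N i = SN (real k / real N) {real (k+1) / real N, 1 - real (k+1) / real N}"
        using 2 iN by (simp add: YN_def)
      have Yi': "YN N (Suc i) = SN (real (k+1) / real N) {}"
        using 2 SiN by (simp add: YN_def)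
      have le: "real k / real N \<le> real (k+1) / real N" using Np by (simp add: divide_right_mono)
      have "YN N i \<subseteq> YN N (Suc i)" unfolding Yi Yi' SN_def using le by auto
      moreover have "?m \<in> YN N (Suc i)"
      proof -
        have "?m \<le> real (k+1) / real N" using Np by (simp add: field_simps)
        thus ?thesis using mA unfolding Yi' SN_def by auto
      qed
      ultimately show ?thesis using mnot by blast
    qed
  qed
qed

lemma height_GN_ge: assumes N: "N > 0" shows "enat N \<le> height (GN N) {0..1::real}"
  by (rule height_lower[of N _ _ "YN N"]) (use YN_ci[OF N] YN_step[OF N] in \<open>auto simp: YN_def\<close>)


lemma height_ge1:
  assumes G: "subgroup G (HomeoGroup {0..1::real})"
  shows "enat 1 \<le> height G {0..1::real}"
proof -
  have GH: "\<And>g. g \<in> G \<Longrightarrow> g \<in> Homeo {0..1::real}"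
    using subgroup.subset[OF G] by (auto simp: HG_simps)
  let ?Y = "\<lambda>i::nat. if i = 0 then {0,1} else {0..1::real}"
  have c0: "closed_invariant G {0..1} {0,1::real}"
  proof -
    have "closedin (top_of_set {0..1::real}) {0,1}" by (rule closed_subset) auto
    moreover have "\<forall>g\<in>G. \<forall>y\<in>{0,1::real}. g y \<in> {0,1}"
    proof (intro ballI)
      fix g y assume g: "g \<in> G" and y: "y \<in> {0,1::real}"
      have "g 0 \<in> {0,1} \<and> g 1 \<in> {0,1}" using homeo01_cases[OF GH[OF g]] by auto
      thus "g y \<in> {0,1}" using y by auto
    qed
    ultimately show ?thesis by (simp add: closed_invariant_def)
  qed
  have c1: "closed_invariant G {0..1} {0..1::real}"
  proof -
    have "\<forall>g\<in>G. \<forall>y\<in>{0..1::real}. g y \<in> {0..1}"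
      using Homeo_into GH by blast
    thus ?thesis unfolding closed_invariant_def by simp
  qed
  have s: "{0,1::real} \<subset> {0..1}"
  proof (rule psubsetI)
    show "{0,1::real} \<subseteq> {0..1}" by simp
    have "(1/2::real) \<in> {0..1}" "(1/2::real) \<notin> {0,1}" by auto
    thus "{0,1::real} \<noteq> {0..1}" by blast
  qed
  have ch1: "\<forall>i\<le>1. closed_invariant G {0..1} (?Y i)"
  proof (intro allI impI)
    fix i :: nat assume "i \<le> 1"
    thus "closed_invariant G {0..1} (?Y i)" using c0 c1 by (cases i) auto
  qed
  have ch2: "\<forall>i<1. ?Y i \<subset> ?Y (Suc i)" using s by simp
  show ?thesis by (rule height_lower[of 1 _ _ ?Y]) (use ch1 ch2 in simp_all)
qed

lemma enat_unbounded: "(\<And>n. enat n \<le> x) \<Longrightarrow> x = \<infinity>"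
proof (cases x)
  case (enat k)
  assume "\<And>n. enat n \<le> x"
  hence "enat (Suc k) \<le> enat k" using enat by simp
  thus ?thesis by simp
qed simp

lemma height_triv: "height {\<lambda>x\<in>{0..1::real}. x} {0..1::real} = \<infinity>"
proof (rule enat_unbounded)
  fix n :: nat
  let ?Y = "\<lambda>i::nat. {0..real (Suc i) / real (Suc n)}"
  show "enat n \<le> height {\<lambda>x\<in>{0..1::real}. x} {0..1::real}"
  proof (rule height_lower[of n _ _ ?Y])
    show "\<forall>i\<le>n. closed_invariant {\<lambda>x\<in>{0..1::real}. x} {0..1} (?Y i)"
    proof (intro allI impI)
      fix i assume i: "i \<le> n"
      have sub: "?Y i \<subseteq> {0..1}" using i by (auto simp: divide_le_eq_1)
      hence "closedin (top_of_set {0..1::real}) (?Y i)" by (intro closed_subset) auto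
      moreover have "\<forall>g\<in>{\<lambda>x\<in>{0..1::real}. x}. \<forall>y\<in>?Y i. g y \<in> ?Y i"
      proof (intro ballI)
        fix g y assume g: "g \<in> {\<lambda>x\<in>{0..1::real}. x}" and y: "y \<in> ?Y i"
        have "y \<in> {0..1}" using y sub by blast
        thus "g y \<in> ?Y i" using g y by simp
      qed
      ultimately show "closed_invariant {\<lambda>x\<in>{0..1::real}. x} {0..1} (?Y i)"
        unfolding closed_invariant_def by auto
    qed
    show "\<forall>i<n. ?Y i \<subset> ?Y (Suc i)"
    proof (intro allI impI)
      fix i assume i: "i < n"
      have lt: "real (Suc i) / real (Suc n) < real (Suc (Suc i)) / real (Suc n)"
        by (intro divide_strict_right_mono) auto
      hence "real (Suc (Suc i)) / real (Suc n) \<in> ?Y (Suc i) - ?Y i" by auto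
      moreover have "?Y i \<subseteq> ?Y (Suc i)" using lt by auto
      ultimately show "?Y i \<subset> ?Y (Suc i)" by blast
    qed
    show "?Y n = {0..1}" by simp
  qed
qed

theorem theorem2p3:
  shows "P_h {0..1::real} = {enat n | n. n \<ge> 1} \<union> {\<infinity>}"
proof
  show "P_h {0..1::real} \<subseteq> {enat n | n. n \<ge> 1} \<union> {\<infinity>}"
  proof
    fix x assume "x \<in> P_h {0..1::real}"
    then obtain G where G: "subgroup G (HomeoGroup {0..1::real})" and x: "x = height G {0..1}"
      by (auto simp: P_h_def)
    have "enat 1 \<le> x" using height_ge1[OF G] x by simp
    thus "x \<in> {enat n | n. n \<ge> 1} \<union> {\<infinity>}" by (cases x) auto
  qed
next
  show "{enat n | n. n \<ge> 1} \<union> {\<infinity>} \<subseteq> P_h {0..1::real}"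
  proof
    fix x assume "x \<in> {enat n | n. n \<ge> 1} \<union> {\<infinity>}"
    then consider n where "n \<ge> 1" "x = enat n" | "x = \<infinity>" by blast
    thus "x \<in> P_h {0..1::real}"
    proof cases
      case 1
      hence N: "n > 0" by simp
      have "height (GN n) {0..1::real} = enat n"
        using height_GN_le[OF N] height_GN_ge[OF N] by (rule antisym)
      thus ?thesis using subgroup_GN[OF N] 1 unfolding P_h_def
        by (intro CollectI exI[of _ "GN n"]) simp
    next
      case 2
      have "subgroup {\<one>\<^bsub>HomeoGroup {0..1::real}\<^esub>} (HomeoGroup {0..1::real})"
        using group.triv_subgroup[OF group_HG] .
      hence "subgroup {\<lambda>x\<in>{0..1::real}. x} (HomeoGroup {0..1::real})" by (simp add: HG_simps)
      thus ?thesis using height_triv 2 unfolding P_h_def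
        by (intro CollectI exI[of _ "{\<lambda>x\<in>{0..1::real}. x}"]) simp
    qed
  qed
qed

end
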